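(* Let $a>0$ and let $\epsilon>0$ be sufficiently small. The regularized system $$\dot x=1,\qquad \epsilon\dot v=-a\epsilon v-\sin\!\left(\pi x\left[1+\tfrac12\psi(v)\right]\right)$$ does not possess periodic solutions (i.e. there is no solution with $v(x+T)=v(x)$ for all $x$, for some $T>0$).
   Context: $\psi:\mathbb{R}\to\mathbb{R}$ is a transition function: $C^1$ on $\mathbb{R}$ and $C^2$ on $[-1,1]$, with $\psi(v)=\operatorname{sign}(v)$ for $|v|\ge1$, $\psi'(v)>0$ for $|v|<1$, and $\operatorname{sign}\psi''(v)=-\operatorname{sign}(v)$ at $|v|=1$. *)

theory Defs
  imports "HOL-Analysis.Analysis"
begin

definition transition_fun :: "(real \<Rightarrow> real) \<Rightarrow> bool" where
  "transition_fun \<psi> \<longleftrightarrow>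
     (\<forall>v. \<psi> differentiable (at v)) \<and> continuous_on UNIV (deriv \<psi>) \<and>
     (\<exists>\<psi>2. (\<forall>v\<in>{-1..1}. (deriv \<psi> has_real_derivative \<psi>2 v) (at v within {-1..1})) \<and>
           continuous_on {-1..1} \<psi>2 \<and>
           (\<forall>v. \<bar>v\<bar> = 1 \<longrightarrow> sgn (\<psi>2 v) = - sgn v)) \<and>
     (\<forall>v. \<bar>v\<bar> \<ge> 1 \<longrightarrow> \<psi> v = sgn v) \<and>
     (\<forall>v. \<bar>v\<bar> < 1 \<longrightarrow> deriv \<psi> v > 0)"

end

theory Submission
  imports Defs
begin

lemma trig_aux:
  fixes t b :: real
  assumes "sin (t + b) = sin t" "sin (t + 2*b) = sin t"
  shows "sin b = 0 \<and> (sin t = 0 \<or> cos b = 1)"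
proof -
  define s c S C where "s = sin t" "c = cos t" "S = sin b" "C = cos b"
  have n1: "s^2 + c^2 = 1" "S^2 + C^2 = 1" unfolding s_c_S_C_def by simp_all
  have e1: "s*C + c*S = s" using assms(1) unfolding s_c_S_C_def by (simp add: sin_add)
  have "sin (t + 2*b) = s*(C^2 - S^2) + c*(2*S*C)"
    unfolding s_c_S_C_def by (simp add: sin_add cos_double sin_double power2_eq_square)
  hence e2: "s*(C^2 - S^2) + c*(2*S*C) = s" using assms(2) s_c_S_C_def by simp
  have cS: "c*S = s*(1-C)" using e1 by (simp add: algebra_simps)
  have "s*(C^2 - S^2) + 2*C*(c*S) = s" using e2 by (simp add: algebra_simps)
  hence "s*(C^2 - S^2) + 2*C*(s*(1-C)) = s" using cS by simp
  hence "s*(C^2 - S^2 + 2*C - 2*C^2) = s" by (simp add: algebra_simps power2_eq_square)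
  moreover have "C^2 - S^2 + 2*C - 2*C^2 = 2*C - 1" using n1(2) by (simp add: algebra_simps)
  ultimately have "s*(2*C - 1) = s" by simp
  hence "s*(C - 1) = 0" by (simp add: algebra_simps)
  hence sc: "s = 0 \<or> C = 1" by simp
  have "S = 0"
  proof (cases "s = 0")
    case True
    then have "c^2 = 1" using n1 by simp
    moreover have "c*S = 0" using e1 True by simp
    ultimately show ?thesis by auto
  next
    case False
    then have "C = 1" using sc by simp
    then show ?thesis using n1 by simp
  qed
  then show ?thesis using sc s_c_S_C_def by simp
qed

lemma sin_zero_const:
  fixes g :: "real \<Rightarrow> real"
  assumes "continuous_on UNIV g" "\<And>x. sin (g x) = 0"
  shows "g x = g y"
proof (rule ccontr)
  assume ne: "g x \<noteq> g y"
  have gap: "g q \<ge> g p + pi" if "g p < g q" for p q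
  proof -
    obtain i :: int where i: "g p = of_int i * pi" using assms(2) sin_zero_iff_int2 by blast
    obtain j :: int where j: "g q = of_int j * pi" using assms(2) sin_zero_iff_int2 by blast
    have "i < j" using that i j by (smt (verit) mult_right_mono of_int_le_iff pi_gt_zero)
    hence "of_int i + 1 \<le> (of_int j::real)" by linarith
    hence "(of_int i + 1) * pi \<le> of_int j * pi" by (simp add: mult_right_mono)
    thus ?thesis using i j by (simp add: distrib_right)
  qed
  have cosne: "cos (g p) \<noteq> 0" for p
    using assms(2)[of p] sin_cos_squared_add[of "g p"] by auto
  have key: "\<exists>z. sin (g z) \<noteq> 0" if "g p < g q" for p q
  proof -
    have c: "continuous_on S g" for S using assms(1) continuous_on_subset by blast
    have "g p \<le> g p + pi/2" "g p + pi/2 \<le> g q" using gap[OF that] pi_gt_zero by linarith+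
    then obtain z where "g z = g p + pi/2"
      by (metis IVT' IVT2' c linorder_le_cases)
    then have "sin (g z) = cos (g p)" by (simp add: sin_add)
    then show ?thesis using cosne by metis
  qed
  from ne have "g x < g y \<or> g y < g x" by linarith
  then show False using key assms(2) by blast
qed


lemma psi_cont:
  assumes "transition_fun \<psi>"
  shows "isCont \<psi> x"
  using assms unfolding transition_fun_def by (simp add: differentiable_imp_continuous_within)

lemma psi_mono:
  assumes "transition_fun \<psi>" "-1 \<le> s" "s < t" "t \<le> 1"
  shows "\<psi> s < \<psi> t"
proof -
  have d: "\<And>x. \<psi> differentiable (at x)" using assms(1) unfolding transition_fun_def by simp
  have c: "continuous_on {s..t} \<psi>" using psi_cont[OF assms(1)] continuous_at_imp_continuous_on by blast
  obtain l z where z: "s < z" "z < t" "DERIV \<psi> z :> l" "\<psi> t - \<psi> s = (t - s) * l"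
    using MVT[OF assms(3) c d] by blast
  have "l = deriv \<psi> z" using z(3) DERIV_imp_deriv by metis
  moreover have "deriv \<psi> z > 0" using assms z(1,2) unfolding transition_fun_def by auto
  ultimately have "(t - s) * l > 0" using assms(3) by simp
  thus ?thesis using z(4) by simp
qed

lemma psi_neg:
  assumes "transition_fun \<psi>" "s > 0"
  shows "\<psi> (-s) < \<psi> s"
proof (cases "s < 1")
  case True
  then show ?thesis using psi_mono[OF assms(1), of "-s" s] assms by simp
next
  case False
  then have "\<psi> s = 1" "\<psi> (-s) = -1" using assms(1) unfolding transition_fun_def by auto
  then show ?thesis by simp
qed

lemma psi_bound:
  assumes "transition_fun \<psi>"
  shows "\<psi> x \<ge> -1"
proof (cases "\<bar>x\<bar> < 1")
  case True
  have "\<psi> (-1) = -1" using assms unfolding transition_fun_def by auto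
  moreover have "\<psi> (-1) < \<psi> x" using psi_mono[OF assms, of "-1" x] True by simp
  ultimately show ?thesis by simp
next
  case False
  then have "\<psi> x = sgn x" using assms unfolding transition_fun_def by auto
  then show ?thesis using False by (auto simp: sgn_if)
qed

theorem theorem7:
  fixes \<psi> :: "real \<Rightarrow> real" and a :: real
  assumes "transition_fun \<psi>" and "a > 0"
  shows "\<exists>\<epsilon>0>0. \<forall>\<epsilon>. 0 < \<epsilon> \<and> \<epsilon> < \<epsilon>0 \<longrightarrow>
           \<not> (\<exists>(v :: real \<Rightarrow> real) (T :: real). T > 0 \<and>
                (\<forall>x. (v has_real_derivative
                        (- a * \<epsilon> * v x - sin (pi * x * (1 + \<psi> (v x) / 2))) / \<epsilon>) (at x)) \<and>
                (\<forall>x. v (x + T) = v x))"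
proof (intro exI[of _ 1] conjI allI impI notI)
  fix \<epsilon> :: real
  assume "0 < \<epsilon> \<and> \<epsilon> < 1"
  hence ep: "\<epsilon> > 0" by simp
  assume "\<exists>(v :: real \<Rightarrow> real) (T :: real). T > 0 \<and>
                (\<forall>x. (v has_real_derivative
                        (- a * \<epsilon> * v x - sin (pi * x * (1 + \<psi> (v x) / 2))) / \<epsilon>) (at x)) \<and>
                (\<forall>x. v (x + T) = v x)"
  then obtain v :: "real \<Rightarrow> real" and T where T: "T > 0"
    and hv0: "\<And>x. (v has_real_derivative
                        (- a * \<epsilon> * v x - sin (pi * x * (1 + \<psi> (v x) / 2))) / \<epsilon>) (at x)"
    and vp: "\<And>x. v (x + T) = v x" by blast
  define \<alpha> where "\<alpha> x = 1 + \<psi> (v x) / 2" for x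
  define D where "D x = (- a * \<epsilon> * v x - sin (pi * x * \<alpha> x)) / \<epsilon>" for x
  have hv: "DERIV v x :> D x" for x using hv0[of x] unfolding D_def \<alpha>_def by simp
  have Dp: "D (x + T) = D x" for x
  proof -
    have "((\<lambda>y. v (y + T)) has_field_derivative D (x + T)) (at x)"
      using hv[of "x + T"] DERIV_shift by blast
    moreover have "(\<lambda>y. v (y + T)) = v" using vp by auto
    ultimately show ?thesis using hv[of x] DERIV_unique by metis
  qed
  have vp2: "v (x + 2*T) = v x" for x using vp[of "x + T"] vp[of x] by (simp add: algebra_simps)
  have Dp2: "D (x + 2*T) = D x" for x using Dp[of "x + T"] Dp[of x] by (simp add: algebra_simps)
  have s1: "sin (pi * x * \<alpha> x + pi * T * \<alpha> x) = sin (pi * x * \<alpha> x)" for x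
  proof -
    have "\<alpha> (x + T) = \<alpha> x" unfolding \<alpha>_def using vp by simp
    then have "sin (pi * (x + T) * \<alpha> x) = sin (pi * x * \<alpha> x)"
      using Dp[of x] vp[of x] ep unfolding D_def by (simp add: divide_simps)
    then show ?thesis by (simp add: algebra_simps)
  qed
  have s2: "sin (pi * x * \<alpha> x + 2 * (pi * T * \<alpha> x)) = sin (pi * x * \<alpha> x)" for x
  proof -
    have "\<alpha> (x + 2*T) = \<alpha> x" unfolding \<alpha>_def using vp2 by simp
    then have "sin (pi * (x + 2*T) * \<alpha> x) = sin (pi * x * \<alpha> x)"
      using Dp2[of x] vp2[of x] ep unfolding D_def by (simp add: divide_simps)
    then show ?thesis by (simp add: algebra_simps)
  qed
  have tr: "sin (pi * T * \<alpha> x) = 0 \<and> (sin (pi * x * \<alpha> x) = 0 \<or> cos (pi * T * \<alpha> x) = 1)" for x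
    using trig_aux[OF s1 s2] .
  have gc: "continuous_on UNIV (\<lambda>x. pi * T * \<alpha> x)"
  proof -
    have "isCont (\<lambda>x. pi * T * \<alpha> x) x" for x
    proof -
      have "isCont v x" using hv DERIV_isCont by blast
      moreover have "isCont \<psi> (v x)" using psi_cont[OF assms(1)] .
      ultimately have "isCont (\<lambda>x. \<psi> (v x)) x" using isCont_o2 by blast
      then show ?thesis unfolding \<alpha>_def by (intro continuous_intros) auto
    qed
    then show ?thesis using continuous_at_imp_continuous_on by blast
  qed
  define c where "c = \<psi> (v 0)"
  define \<omega> where "\<omega> = pi * (1 + c/2)"
  have ac: "\<alpha> x = 1 + c/2" for x
  proof -
    have "pi * T * \<alpha> x = pi * T * \<alpha> 0" using sin_zero_const[OF gc] tr by blast
    then have "\<alpha> x = \<alpha> 0" using T by simp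
    then show ?thesis unfolding \<alpha>_def c_def by simp
  qed
  have psic: "\<psi> (v x) = c" for x using ac[of x] unfolding \<alpha>_def by simp
  have cge: "c \<ge> -1" unfolding c_def using psi_bound[OF assms(1)] .
  have wpos: "\<omega> > 0" unfolding \<omega>_def using cge by (simp add: pi_gt_zero)
  have wT: "cos (\<omega> * T) = 1 \<and> sin (\<omega> * T) = 0"
  proof -
    define x0 where "x0 = 1 / (2 * (1 + c/2))"
    have "pi * x0 * \<alpha> x0 = pi / 2" unfolding x0_def ac using cge by (simp add: field_simps)
    then have "sin (pi * x0 * \<alpha> x0) = 1" by (simp only:) simp
    then show ?thesis using tr[of x0] unfolding ac \<omega>_def by (simp add: algebra_simps)
  qed
  define A where "A = - a / (\<epsilon> * (\<omega>^2 + a^2))"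
  define B where "B = \<omega> / (\<epsilon> * (\<omega>^2 + a^2))"
  define p where "p x = A * sin (\<omega> * x) + B * cos (\<omega> * x)" for x
  have hv': "DERIV v x :> - a * v x - sin (\<omega> * x) / \<epsilon>" for x
    using hv[of x] ep unfolding D_def ac \<omega>_def by (simp add: field_simps)
  have hp: "DERIV p x :> - a * p x - sin (\<omega> * x) / \<epsilon>" for x
  proof -
    have "DERIV p x :> A * (cos (\<omega> * x) * \<omega>) - B * (sin (\<omega> * x) * \<omega>)"
      unfolding p_def by (auto intro!: derivative_eq_intros)
    moreover have "A * (cos (\<omega> * x) * \<omega>) - B * (sin (\<omega> * x) * \<omega>) = - a * p x - sin (\<omega> * x) / \<epsilon>"
    proof -
      have pos: "\<epsilon> * (\<omega>^2 + a^2) > 0" using ep wpos by (simp add: add_pos_nonneg)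
      have gen: "(- a / K) * (cx * w) - (w / K) * (sx * w) = - a * ((- a / K) * sx + (w / K) * cx) - sx / \<epsilon>"
        if "K = \<epsilon> * (w^2 + a^2)" "K > 0" for K w sx cx :: real
      proof -
        have Ke: "sx / \<epsilon> = sx * (w^2 + a^2) / K" using that ep by (simp add: field_simps)
        have "(- a / K) * (cx * w) - (w / K) * (sx * w) = (- a * cx * w - w^2 * sx) / K"
          using that(2) by (simp add: field_simps power2_eq_square)
        also have "... = (- a * (- a * sx + w * cx) - sx * (w^2 + a^2)) / K"
          by (simp add: algebra_simps power2_eq_square)
        also have "... = - a * ((- a / K) * sx + (w / K) * cx) - sx / \<epsilon>"
          unfolding Ke using that(2) by (simp add: field_simps)
        finally show ?thesis .
      qed
      show ?thesis unfolding p_def A_def B_def using gen[OF refl pos] by simp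
    qed
    ultimately show ?thesis by simp
  qed
  define q where "q x = exp (a * x) * (v x - p x)" for x
  have hq: "DERIV q x :> 0" for x
  proof -
    have "DERIV q x :> exp (a * x) * a * (v x - p x) + exp (a * x) * ((- a * v x - sin (\<omega> * x) / \<epsilon>) - (- a * p x - sin (\<omega> * x) / \<epsilon>))"
      unfolding q_def by (auto intro!: derivative_eq_intros hv' hp)
    then show ?thesis by (simp add: algebra_simps)
  qed
  have pT: "p T = p 0" unfolding p_def using wT by simp
  have "q T = q 0" using DERIV_isconst_all hq by blast
  then have "exp (a * T) * (v 0 - p 0) = v 0 - p 0" unfolding q_def using vp[of 0] pT by simp
  moreover have "exp (a * T) > 1" using assms(2) T by simp
  ultimately have "v 0 - p 0 = 0"
    by (metis mult_cancel_right1 order_less_irrefl)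
  then have q0: "q 0 = 0" unfolding q_def by simp
  have vpx: "v x = p x" for x
  proof -
    have "q x = q 0" using DERIV_isconst_all hq by blast
    then show ?thesis using q0 unfolding q_def by simp
  qed
  define x1 where "x1 = pi / (2 * \<omega>)"
  define x2 where "x2 = 3 * pi / (2 * \<omega>)"
  have "\<omega> * x1 = pi / 2" unfolding x1_def using wpos by simp
  then have px1: "p x1 = A" unfolding p_def by (simp only:) simp
  have "\<omega> * x2 = pi / 2 + pi" unfolding x2_def using wpos by (simp add: field_simps)
  then have px2: "p x2 = - A" unfolding p_def by (simp only: sin_periodic_pi cos_periodic_pi sin_pi_half cos_pi_half)
  have "\<psi> A = \<psi> (- A)" using psic[of x1] psic[of x2] vpx[of x1] vpx[of x2] px1 px2 by simp
  moreover have "A < 0" unfolding A_def using assms(2) ep wpos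
    by (simp add: add_pos_pos divide_neg_pos)
  ultimately show False using psi_neg[OF assms(1), of "- A"] by simp
qed simp

end
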